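(* Let $\mathbf{A}'$ be an $n\times d$ matrix, $k\ge 1$, $\varepsilon\in(0,1)$, and suppose the maximum coverage optimum $\mathbf{OPT}$ of $\mathbf{A}'$ with $k$ subsets satisfies $\mathbf{OPT}\le C_1\, k\log d/\varepsilon^2$ for a constant $C_1$. Then the total number of nonzero entries among small items of $\mathbf{A}'$ is $O(d\log d/\varepsilon^2)$.
   Context: Item $i$ belongs to subset (column) $j$ iff $A'_{ij}\neq 0$. $\mathbf{OPT}$ is the maximum over sets of $k$ columns of the number of rows having a nonzero entry in at least one of those columns. An item (row) is small if it has fewer than $d/k$ nonzero entries. The implied constant in $O(\cdot)$ depends only on $C_1$. *)

theory Defs
  imports Complex_Main
begin

text \<open>An n x d real matrix is represented as A :: nat => nat => real, entries A i j
  for i < n (rows = items), j < d (columns = subsets).\<close>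

definition covered :: "(nat \<Rightarrow> nat \<Rightarrow> real) \<Rightarrow> nat \<Rightarrow> nat set \<Rightarrow> nat" where
  "covered A n S = card {i. i < n \<and> (\<exists>j\<in>S. A i j \<noteq> 0)}"

text \<open>Maximum coverage optimum with k subsets (columns); sets of at most k columns,
  which equals the optimum over exactly k columns whenever k \<le> d (coverage is monotone).\<close>
definition OPT :: "(nat \<Rightarrow> nat \<Rightarrow> real) \<Rightarrow> nat \<Rightarrow> nat \<Rightarrow> nat \<Rightarrow> nat" where
  "OPT A n d k = Max {covered A n S | S. S \<subseteq> {..<d} \<and> card S \<le> k}"

definition row_nnz :: "(nat \<Rightarrow> nat \<Rightarrow> real) \<Rightarrow> nat \<Rightarrow> nat \<Rightarrow> nat" where
  "row_nnz A d i = card {j. j < d \<and> A i j \<noteq> 0}"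

definition small_item :: "(nat \<Rightarrow> nat \<Rightarrow> real) \<Rightarrow> nat \<Rightarrow> nat \<Rightarrow> nat \<Rightarrow> bool" where
  "small_item A d k i \<longleftrightarrow> real (row_nnz A d i) < real d / real k"

definition small_nnz :: "(nat \<Rightarrow> nat \<Rightarrow> real) \<Rightarrow> nat \<Rightarrow> nat \<Rightarrow> nat \<Rightarrow> nat" where
  "small_nnz A n d k = (\<Sum>i | i < n \<and> small_item A d k i. row_nnz A d i)"

end

theory Submission
  imports Defs
begin

lemma double_count:
  fixes T :: "nat \<Rightarrow> nat set"
  assumes "finite R" "\<forall>i\<in>R. T i \<subseteq> {..<d}"
  shows "(\<Sum>i\<in>R. real (card (T i))) = (\<Sum>j<d. real (card {i\<in>R. j \<in> T i}))"
proof -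
  have "(\<Sum>i\<in>R. real (card (T i))) = (\<Sum>i\<in>R. \<Sum>j<d. if j \<in> T i then 1 else (0::real))"
  proof (rule sum.cong[OF refl])
    fix i assume "i \<in> R"
    then have "T i = {..<d} \<inter> T i" using assms by auto
    then have "(\<Sum>j<d. if j \<in> T i then 1 else (0::real)) = real (card ({..<d} \<inter> T i))"
      by (simp add: sum.If_cases)
    then show "real (card (T i)) = (\<Sum>j<d. if j \<in> T i then 1 else (0::real))"
      using \<open>T i = {..<d} \<inter> T i\<close> by simp
  qed
  also have "\<dots> = (\<Sum>j<d. \<Sum>i\<in>R. if j \<in> T i then 1 else (0::real))"
    by (rule sum.swap)
  also have "\<dots> = (\<Sum>j<d. real (card {i\<in>R. j \<in> T i}))"
  proof (rule sum.cong[OF refl])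
    fix j
    have "(\<Sum>i\<in>R. if j \<in> T i then 1 else (0::real)) = real (card (R \<inter> {i. j \<in> T i}))"
      using assms(1) by (simp add: sum.If_cases)
    also have "R \<inter> {i. j \<in> T i} = {i\<in>R. j \<in> T i}" by blast
    finally show "(\<Sum>i\<in>R. if j \<in> T i then 1 else (0::real)) = real (card {i\<in>R. j \<in> T i})" .
  qed
  finally show ?thesis .
qed

lemma greedy:
  fixes T :: "nat \<Rightarrow> nat set" and I :: "nat set" and d k :: nat
  assumes fin: "finite I" and sub: "\<forall>i\<in>I. T i \<subseteq> {..<d}"
    and sm: "\<forall>i\<in>I. real (card (T i)) * real k \<le> real d"
  shows "\<exists>S\<subseteq>{..<d}. card S \<le> t \<and>
     (real k * (\<Sum>i\<in>I. real (card (T i))) \<le> 2 * real d * real (card {i\<in>I. T i \<inter> S \<noteq> {}}) \<or>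
      real t * (\<Sum>i\<in>I. real (card (T i))) \<le> 2 * real d * real (card {i\<in>I. T i \<inter> S \<noteq> {}}))"
proof (induction t)
  case 0
  show ?case by (rule exI[of _ "{}"]) (auto intro: sum_nonneg)
next
  case (Suc t)
  define W0 where "W0 = (\<Sum>i\<in>I. real (card (T i)))"
  from Suc.IH obtain S where S: "S \<subseteq> {..<d}" "card S \<le> t"
    and D: "real k * W0 \<le> 2 * real d * real (card {i\<in>I. T i \<inter> S \<noteq> {}}) \<or>
      real t * W0 \<le> 2 * real d * real (card {i\<in>I. T i \<inter> S \<noteq> {}})"
    unfolding W0_def by blast
  define cov where "cov = real (card {i\<in>I. T i \<inter> S \<noteq> {}})"
  have finS: "finite S" using S(1) finite_subset by blast
  show ?case
  proof (cases "real k * W0 \<le> 2 * real d * cov")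
    case True
    then show ?thesis using S unfolding W0_def cov_def
      by (intro exI[of _ S]) auto
  next
    case False
    with D have D2: "real t * W0 \<le> 2 * real d * cov" unfolding cov_def by auto
    define R1 where "R1 = {i\<in>I. T i \<inter> S = {}}"
    define R2 where "R2 = {i\<in>I. T i \<inter> S \<noteq> {}}"
    define WS where "WS = (\<Sum>i\<in>R1. real (card (T i)))"
    have "I = R1 \<union> R2" "R1 \<inter> R2 = {}" unfolding R1_def R2_def by auto
    moreover have "finite R1" "finite R2" using fin unfolding R1_def R2_def by auto
    ultimately have W0s: "W0 = WS + (\<Sum>i\<in>R2. real (card (T i)))"
      unfolding W0_def WS_def by (metis sum.union_disjoint)
    have "real k * (\<Sum>i\<in>R2. real (card (T i))) = (\<Sum>i\<in>R2. real (card (T i)) * real k)"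
      by (simp add: sum_distrib_left mult.commute)
    also have "\<dots> \<le> (\<Sum>i\<in>R2. real d)"
      using sm unfolding R2_def by (intro sum_mono) auto
    also have "\<dots> = real d * cov" unfolding cov_def R2_def by simp
    finally have B: "real k * (\<Sum>i\<in>R2. real (card (T i))) \<le> real d * cov" .
    have covnn: "cov \<ge> 0" unfolding cov_def by simp
    have dnn: "real d \<ge> 0" by simp
    have kpos: "real k > 0"
    proof (rule ccontr)
      assume "\<not> real k > 0" then have "k = 0" by simp
      then show False using False covnn by simp
    qed
    have "real k * WS \<ge> real k * W0 - real d * cov" using W0s B by (simp add: algebra_simps)
    moreover have "real d * cov < real k * W0 / 2" using False by simp
    ultimately have "real k * WS > real k * (W0 / 2)" by simp
    then have WSb: "WS > W0 / 2" using kpos by simp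
    have W0nn: "W0 \<ge> 0" unfolding W0_def by (simp add: sum_nonneg)
    have WSpos: "WS > 0" using WSb W0nn by simp
    have dpos: "d > 0"
    proof (rule ccontr)
      assume "\<not> d > 0"
      then have "\<forall>i\<in>R1. T i = {}" using sub unfolding R1_def by auto
      then have "WS = 0" unfolding WS_def by simp
      then show False using WSpos by simp
    qed
    have dc: "WS = (\<Sum>j<d. real (card {i\<in>R1. j \<in> T i}))"
      unfolding WS_def using \<open>finite R1\<close> sub unfolding R1_def
      by (intro double_count) auto
    have "\<exists>j<d. real d * real (card {i\<in>R1. j \<in> T i}) \<ge> WS"
    proof (rule ccontr)
      assume "\<not> ?thesis"
      then have lt: "\<forall>j\<in>{..<d}. real (card {i\<in>R1. j \<in> T i}) < WS / real d"
        using dpos by (auto simp: field_simps mult.commute)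
      have "(\<Sum>j<d. real (card {i\<in>R1. j \<in> T i})) < (\<Sum>j<d. WS / real d)"
        using dpos lt by (intro sum_strict_mono) auto
      also have "\<dots> = WS" using dpos by simp
      finally show False using dc by simp
    qed
    then obtain j where j: "j < d" "real d * real (card {i\<in>R1. j \<in> T i}) \<ge> WS" by blast
    have eq: "{i\<in>I. T i \<inter> insert j S \<noteq> {}} = {i\<in>I. T i \<inter> S \<noteq> {}} \<union> {i\<in>R1. j \<in> T i}"
      unfolding R1_def by auto
    have "card {i\<in>I. T i \<inter> insert j S \<noteq> {}} = card {i\<in>I. T i \<inter> S \<noteq> {}} + card {i\<in>R1. j \<in> T i}"
      unfolding eq using fin unfolding R1_def by (intro card_Un_disjoint) auto
    then have cov': "real (card {i\<in>I. T i \<inter> insert j S \<noteq> {}}) = cov + real (card {i\<in>R1. j \<in> T i})"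
      unfolding cov_def by simp
    have "real (Suc t) * W0 = real t * W0 + W0" by (simp add: algebra_simps)
    also have "\<dots> \<le> 2 * real d * cov + 2 * WS" using D2 WSb by simp
    also have "\<dots> \<le> 2 * real d * cov + 2 * (real d * real (card {i\<in>R1. j \<in> T i}))" using j by simp
    also have "\<dots> = 2 * real d * real (card {i\<in>I. T i \<inter> insert j S \<noteq> {}})"
      using cov' by (simp add: algebra_simps)
    finally have "real (Suc t) * W0 \<le> 2 * real d * real (card {i\<in>I. T i \<inter> insert j S \<noteq> {}})" .
    moreover have "insert j S \<subseteq> {..<d}" using S j by auto
    moreover have "card (insert j S) \<le> Suc t" using S finS by (simp add: card_insert_if)
    ultimately show ?thesis unfolding W0_def by blast
  qed
qed

theorem lemma9:
  fixes C1 :: real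
  shows "\<exists>C::real. \<forall>(A :: nat \<Rightarrow> nat \<Rightarrow> real) n d k (\<epsilon>::real).
           k \<ge> 1 \<longrightarrow> 0 < \<epsilon> \<longrightarrow> \<epsilon> < 1 \<longrightarrow>
           real (OPT A n d k) \<le> C1 * real k * ln (real d) / \<epsilon>\<^sup>2 \<longrightarrow>
           real (small_nnz A n d k) \<le> C * real d * ln (real d) / \<epsilon>\<^sup>2"
proof (intro exI[of _ "2 * C1"] allI impI)
  fix A :: "nat \<Rightarrow> nat \<Rightarrow> real" and n d k :: nat and \<epsilon> :: real
  assume k: "k \<ge> 1" and e: "0 < \<epsilon>" "\<epsilon> < 1"
    and opt: "real (OPT A n d k) \<le> C1 * real k * ln (real d) / \<epsilon>\<^sup>2"
  define T where "T i = {j. j < d \<and> A i j \<noteq> 0}" for i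
  define I where "I = {i. i < n \<and> small_item A d k i}"
  have finI: "finite I" unfolding I_def by auto
  have sub: "\<forall>i\<in>I. T i \<subseteq> {..<d}" unfolding T_def by auto
  have kpos: "real k > 0" using k by simp
  have sm: "\<forall>i\<in>I. real (card (T i)) * real k \<le> real d"
  proof
    fix i assume "i \<in> I"
    then have "real (card (T i)) < real d / real k"
      unfolding I_def small_item_def row_nnz_def T_def by auto
    then show "real (card (T i)) * real k \<le> real d" using kpos by (simp add: field_simps)
  qed
  obtain S where S: "S \<subseteq> {..<d}" "card S \<le> k"
    and D: "real k * (\<Sum>i\<in>I. real (card (T i))) \<le> 2 * real d * real (card {i\<in>I. T i \<inter> S \<noteq> {}})"
    using greedy[OF finI sub sm, of k] by auto
  have sn: "real (small_nnz A n d k) = (\<Sum>i\<in>I. real (card (T i)))"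
    unfolding small_nnz_def I_def row_nnz_def T_def by simp
  have "card {i\<in>I. T i \<inter> S \<noteq> {}} \<le> covered A n S"
    unfolding covered_def I_def T_def using S(1)
    by (intro card_mono) auto
  also have "covered A n S \<le> OPT A n d k"
  proof -
    have "{covered A n S | S. S \<subseteq> {..<d} \<and> card S \<le> k} = (\<lambda>S. covered A n S) ` {S. S \<subseteq> {..<d} \<and> card S \<le> k}"
      by auto
    then have "finite {covered A n S | S. S \<subseteq> {..<d} \<and> card S \<le> k}" by simp
    then show ?thesis unfolding OPT_def using S by (intro Max_ge) auto
  qed
  finally have c: "real (card {i\<in>I. T i \<inter> S \<noteq> {}}) \<le> real (OPT A n d k)" by simp
  have "real k * real (small_nnz A n d k) \<le> 2 * real d * real (OPT A n d k)"
  proof -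
    have "2 * real d * real (card {i\<in>I. T i \<inter> S \<noteq> {}}) \<le> 2 * real d * real (OPT A n d k)"
      using c by (intro mult_left_mono) auto
    then show ?thesis unfolding sn using D by linarith
  qed
  also have "\<dots> \<le> 2 * real d * (C1 * real k * ln (real d) / \<epsilon>\<^sup>2)"
    using opt by (intro mult_left_mono) auto
  also have "\<dots> = real k * (2 * C1 * real d * ln (real d) / \<epsilon>\<^sup>2)" by (simp add: field_simps)
  finally have "real k * real (small_nnz A n d k) \<le> real k * (2 * C1 * real d * ln (real d) / \<epsilon>\<^sup>2)" .
  then show "real (small_nnz A n d k) \<le> 2 * C1 * real d * ln (real d) / \<epsilon>\<^sup>2"
    using kpos by (rule mult_left_le_imp_le)
qed

end
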